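(* Let $A>0$, $b>0$ and $\rho\in(\frac14,\frac12)$. Then, as $h\to0_+$, \[ \inf_{\substack{m\in\mathbb Z\\|m|\le A}}\lambda_1\bigl(\mathcal H^{b,\rho}_{m,h}\bigr)=-1-h^{1/2}+\Bigl(\hat\beta(b,A)-\frac12\Bigr)h+o(h), \qquad\hat\beta(b,A)=\inf_{\substack{m\in\mathbb Z\\|m|\le A}}\Bigl(m-\frac b2\Bigr)^2. \]
   Context: Let $h\in(0,1)$ with $h^{\frac12-\rho}<\frac13$ and $\delta=h^{\rho-\frac12}$. For $m\in\mathbb Z$, $\mathcal H^{b,\rho}_{m,h}$ is the self-adjoint operator in the weighted space $L^2((0,\delta);(1-h^{1/2}\tau)d\tau)$ associated with the quadratic form \[ v\mapsto\int_0^\delta\Bigl(|v'(\tau)|^2+\frac{h}{(1-h^{1/2}\tau)^2}\Bigl(m-\frac b2(1-h^{1/2}\tau)^2\Bigr)^2|v(\tau)|^2\Bigr)(1-h^{1/2}\tau)\,d\tau-|v(0)|^2 \] on $\{v\in H^1((0,\delta)):v(\delta)=0\}$ (boundary conditions $v'(0)=-v(0)$, $v(\delta)=0$). $\lambda_1(\cdot)$ denotes the lowest eigenvalue. *)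

theory Defs
  imports "HOL-Analysis.Analysis" "HOL-Library.Landau_Symbols"
begin

text \<open>Form domain: v in H^1((0,delta)) with v(delta) = 0.  On an interval, H^1 consists
  exactly of the functions v(x) = v(0) + integral_0^x g with g in L^2 (absolutely
  continuous with square-integrable weak derivative g = v').\<close>
definition H1_dir :: "real \<Rightarrow> (real \<Rightarrow> real) \<Rightarrow> (real \<Rightarrow> real) \<Rightarrow> bool" where
  "H1_dir \<delta> v g \<longleftrightarrow>
     set_integrable lborel {0..\<delta>} g \<and>
     set_integrable lborel {0..\<delta>} (\<lambda>t. (g t)\<^sup>2) \<and>
     (\<forall>x\<in>{0..\<delta>}. v x = v 0 + (LBINT t=0..x. g t)) \<and>
     v \<delta> = 0"

definition qform :: "real \<Rightarrow> real \<Rightarrow> int \<Rightarrow> real \<Rightarrow> (real \<Rightarrow> real) \<Rightarrow> (real \<Rightarrow> real) \<Rightarrow> real" where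
  "qform h b m \<delta> v g =
     (LBINT \<tau>=0..\<delta>. ((g \<tau>)\<^sup>2 + h / (1 - sqrt h * \<tau>)\<^sup>2
        * (real_of_int m - b / 2 * (1 - sqrt h * \<tau>)\<^sup>2)\<^sup>2 * (v \<tau>)\<^sup>2) * (1 - sqrt h * \<tau>))
     - (v 0)\<^sup>2"

definition wnorm2 :: "real \<Rightarrow> real \<Rightarrow> (real \<Rightarrow> real) \<Rightarrow> real" where
  "wnorm2 h \<delta> v = (LBINT \<tau>=0..\<delta>. (v \<tau>)\<^sup>2 * (1 - sqrt h * \<tau>))"

text \<open>Lowest eigenvalue of H^{b,rho}_{m,h}, via the min-max principle (bottom of the
  spectrum = infimum of the Rayleigh quotient over the form domain), delta = h^(rho-1/2).\<close>
definition lambda1 :: "real \<Rightarrow> real \<Rightarrow> real \<Rightarrow> int \<Rightarrow> real" where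
  "lambda1 b \<rho> h m =
     (let \<delta> = h powr (\<rho> - 1/2) in
      Inf {qform h b m \<delta> v g / wnorm2 h \<delta> v | v g. H1_dir \<delta> v g \<and> wnorm2 h \<delta> v \<noteq> 0})"

definition beta_hat :: "real \<Rightarrow> real \<Rightarrow> real" where
  "beta_hat b A = Inf ((\<lambda>m::int. (real_of_int m - b / 2)\<^sup>2) ` {m. \<bar>real_of_int m\<bar> \<le> A})"

end

theory Submission
  imports Defs
begin

lemma fubini_prod:
  fixes p q :: "real \<Rightarrow> real"
  assumes p: "integrable lborel p" and q: "integrable lborel q"
  shows "integrable lborel (\<lambda>x. p x * (\<integral>t. (if t \<le> x then q t else 0) \<partial>lborel))"
    and "integrable lborel (\<lambda>t. q t * (\<integral>x. (if x < t then p x else 0) \<partial>lborel))"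
    and "(\<integral>x. p x * (\<integral>t. (if t \<le> x then q t else 0) \<partial>lborel) \<partial>lborel)
       + (\<integral>t. q t * (\<integral>x. (if x < t then p x else 0) \<partial>lborel) \<partial>lborel)
       = (\<integral>x. p x \<partial>lborel) * (\<integral>t. q t \<partial>lborel)"
proof -
  have [measurable]: "p \<in> borel_measurable lborel" "q \<in> borel_measurable lborel"
    using p q by auto
  have pq: "integrable (lborel \<Otimes>\<^sub>M lborel) (\<lambda>(x,t). p x * q t)"
  proof (rule lborel_pair.Fubini_integrable)
    show "(\<lambda>(x,t). p x * q t) \<in> borel_measurable (lborel \<Otimes>\<^sub>M lborel)" by measurable
    show "integrable lborel (\<lambda>x. \<integral>y. norm (case (x, y) of (x, t) \<Rightarrow> p x * q t) \<partial>lborel)"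
      by (simp add: abs_mult p q integrable_abs)
    show "AE x in lborel. integrable lborel (\<lambda>y. case (x, y) of (x, t) \<Rightarrow> p x * q t)"
      using q by simp
  qed
  have k1: "integrable (lborel \<Otimes>\<^sub>M lborel) (\<lambda>(x,t). p x * (if t \<le> x then q t else 0))"
    by (rule Bochner_Integration.integrable_bound[OF pq]) (auto split: if_splits simp: abs_mult)
  have k2: "integrable (lborel \<Otimes>\<^sub>M lborel) (\<lambda>(x,t). q t * (if x < t then p x else 0))"
    by (rule Bochner_Integration.integrable_bound[OF pq]) (auto split: if_splits simp: abs_mult)
  have e1: "(\<integral>x. p x * (\<integral>t. (if t \<le> x then q t else 0) \<partial>lborel) \<partial>lborel)
     = integral\<^sup>L (lborel \<Otimes>\<^sub>M lborel) (\<lambda>(x,t). p x * (if t \<le> x then q t else 0))"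
    using lborel_pair.integral_fst[of "\<lambda>x t. p x * (if t \<le> x then q t else 0)"] k1
    by simp
  have e2: "(\<integral>t. q t * (\<integral>x. (if x < t then p x else 0) \<partial>lborel) \<partial>lborel)
     = integral\<^sup>L (lborel \<Otimes>\<^sub>M lborel) (\<lambda>(x,t). q t * (if x < t then p x else 0))"
    using lborel_pair.integral_snd[of "\<lambda>x t. q t * (if x < t then p x else 0)"] k2
    by simp
  have e3: "integral\<^sup>L (lborel \<Otimes>\<^sub>M lborel) (\<lambda>(x,t). p x * (if t \<le> x then q t else 0))
     + integral\<^sup>L (lborel \<Otimes>\<^sub>M lborel) (\<lambda>(x,t). q t * (if x < t then p x else 0))
     = integral\<^sup>L (lborel \<Otimes>\<^sub>M lborel) (\<lambda>(x,t). p x * q t)"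
    apply (subst Bochner_Integration.integral_add[OF k1 k2, symmetric])
    apply (rule Bochner_Integration.integral_cong)
    by auto
  have e4: "integral\<^sup>L (lborel \<Otimes>\<^sub>M lborel) (\<lambda>(x,t). p x * q t) = (\<integral>x. p x \<partial>lborel) * (\<integral>t. q t \<partial>lborel)"
    using lborel_pair.integral_fst[of "\<lambda>x t. p x * q t"] pq by simp
  show "(\<integral>x. p x * (\<integral>t. (if t \<le> x then q t else 0) \<partial>lborel) \<partial>lborel)
       + (\<integral>t. q t * (\<integral>x. (if x < t then p x else 0) \<partial>lborel) \<partial>lborel)
       = (\<integral>x. p x \<partial>lborel) * (\<integral>t. q t \<partial>lborel)" using e1 e2 e3 e4 by simp
  show "integrable lborel (\<lambda>x. p x * (\<integral>t. (if t \<le> x then q t else 0) \<partial>lborel))"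
    using lborel_pair.integrable_fst[of "\<lambda>x t. p x * (if t \<le> x then q t else 0)"] k1 by simp
  show "integrable lborel (\<lambda>t. q t * (\<integral>x. (if x < t then p x else 0) \<partial>lborel))"
    using lborel_pair.integrable_snd[of "\<lambda>x t. q t * (if x < t then p x else 0)"] k2 by simp
qed

lemma ibp:
  fixes p q U W :: "real \<Rightarrow> real" and a b :: real
  assumes ab: "a \<le> b"
  and p: "set_integrable lborel {a..b} p" and q: "set_integrable lborel {a..b} q"
  and U: "\<And>x. x \<in> {a..b} \<Longrightarrow> U x = U a + (LBINT t:{a..x}. p t)"
  and W: "\<And>x. x \<in> {a..b} \<Longrightarrow> W x = W a + (LBINT t:{a..x}. q t)"
  shows "set_integrable lborel {a..b} (\<lambda>x. p x * W x + U x * q x)"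
    and "(LBINT x:{a..b}. p x * W x + U x * q x) = U b * W b - U a * W a"
proof -
  define p' where "p' x = indicator {a..b} x * p x" for x
  define q' where "q' x = indicator {a..b} x * q x" for x
  have ip: "integrable lborel p'" using p unfolding p'_def set_integrable_def by simp
  have iq: "integrable lborel q'" using q unfolding q'_def set_integrable_def by simp
  note F = fubini_prod[OF ip iq]
  have inW: "(\<integral>t. (if t \<le> x then q' t else 0) \<partial>lborel) = W x - W a" if "x \<in> {a..b}" for x
  proof -
    have "(\<integral>t. (if t \<le> x then q' t else 0) \<partial>lborel) = (LBINT t:{a..x}. q t)"
      unfolding set_lebesgue_integral_def q'_def
      by (rule Bochner_Integration.integral_cong) (use that in \<open>auto simp: indicator_def\<close>)
    then show ?thesis using W[OF that] by simp
  qed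
  have inU: "(\<integral>x. (if x < t then p' x else 0) \<partial>lborel) = U t - U a" if "t \<in> {a..b}" for t
  proof -
    have [measurable]: "p' \<in> borel_measurable borel" using ip by auto
    have "(\<integral>x. (if x < t then p' x else 0) \<partial>lborel) = (\<integral>x. indicator {a..t} x * p' x \<partial>lborel)"
      apply (rule integral_cong_AE)
        apply measurable
      using that AE_lborel_singleton[of t] by (auto simp: indicator_def p'_def elim!: eventually_mono)
    also have "\<dots> = (LBINT x:{a..t}. p x)"
      unfolding set_lebesgue_integral_def p'_def
      by (rule Bochner_Integration.integral_cong) (use that in \<open>auto simp: indicator_def\<close>)
    finally show ?thesis using U[OF that] by simp
  qed
  have c1: "p' x * (\<integral>t. (if t \<le> x then q' t else 0) \<partial>lborel) = indicator {a..b} x * (p x * (W x - W a))" for x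
    using inW[of x] by (cases "x \<in> {a..b}") (auto simp: p'_def)
  have c2: "q' t * (\<integral>x. (if x < t then p' x else 0) \<partial>lborel) = indicator {a..b} t * (q t * (U t - U a))" for t
    using inU[of t] by (cases "t \<in> {a..b}") (auto simp: q'_def)
  have i1: "integrable lborel (\<lambda>x. indicator {a..b} x * (p x * (W x - W a)))"
    using F(1) c1 by simp
  have i2: "integrable lborel (\<lambda>x. indicator {a..b} x * (q x * (U x - U a)))"
    using F(2) c2 by simp
  have eq: "indicator {a..b} x * (p x * W x + U x * q x) =
     indicator {a..b} x * (p x * (W x - W a)) + indicator {a..b} x * (q x * (U x - U a))
     + W a * p' x + U a * q' x" for x
    by (simp add: p'_def q'_def algebra_simps)
  have int: "integrable lborel (\<lambda>x. indicator {a..b} x * (p x * W x + U x * q x))"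
    unfolding eq using i1 i2 ip iq by simp
  then show "set_integrable lborel {a..b} (\<lambda>x. p x * W x + U x * q x)"
    unfolding set_integrable_def by simp
  have Ub: "U b - U a = (\<integral>x. p' x \<partial>lborel)"
    using U[of b] ab unfolding p'_def set_lebesgue_integral_def by simp
  have Wb: "W b - W a = (\<integral>x. q' x \<partial>lborel)"
    using W[of b] ab unfolding q'_def set_lebesgue_integral_def by simp
  have "(LBINT x:{a..b}. p x * W x + U x * q x) =
     (\<integral>x. indicator {a..b} x * (p x * (W x - W a)) \<partial>lborel) + (\<integral>x. indicator {a..b} x * (q x * (U x - U a)) \<partial>lborel)
     + W a * (\<integral>x. p' x \<partial>lborel) + U a * (\<integral>x. q' x \<partial>lborel)"
    unfolding set_lebesgue_integral_def
    by (simp only: real_scaleR_def eq, simp add: i1 i2 ip iq)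
  also have "\<dots> = (U b - U a) * (W b - W a) + W a * (U b - U a) + U a * (W b - W a)"
    using F(3) c1 c2 Ub Wb by simp
  also have "\<dots> = U b * W b - U a * W a" by (simp add: algebra_simps)
  finally show "(LBINT x:{a..b}. p x * W x + U x * q x) = U b * W b - U a * W a" .
qed

lemma set_integrable_cont_mult:
  fixes f c :: "real \<Rightarrow> real"
  assumes f: "set_integrable lborel {a..b} f" and c: "continuous_on {a..b} c"
  shows "set_integrable lborel {a..b} (\<lambda>x. c x * f x)"
proof -
  have "compact (c ` {a..b})" using c by (intro compact_continuous_image) auto
  then have "bounded (c ` {a..b})" by (rule compact_imp_bounded)
  then obtain B where B0: "\<forall>y\<in>c ` {a..b}. \<bar>y\<bar> \<le> B" by (auto simp: bounded_real)
  then have B: "\<And>x. x \<in> {a..b} \<Longrightarrow> \<bar>c x\<bar> \<le> B" by auto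
  have fm: "(\<lambda>x. indicator {a..b} x * f x) \<in> borel_measurable lborel"
    using f unfolding set_integrable_def by auto
  have cm: "(\<lambda>x. indicator {a..b} x * c x) \<in> borel_measurable lborel"
    using borel_measurable_continuous_on_indicator[OF _ c] by simp
  have "(\<lambda>x. (indicator {a..b} x * c x) * (indicator {a..b} x * f x)) \<in> borel_measurable lborel"
    using fm cm by measurable
  moreover have "(\<lambda>x. (indicator {a..b} x * c x) * (indicator {a..b} x * f x)) = (\<lambda>x. indicator {a..b} x *\<^sub>R (c x * f x))"
    by (auto simp: indicator_def)
  ultimately have m: "set_borel_measurable lborel {a..b} (\<lambda>x. c x * f x)"
    unfolding set_borel_measurable_def by simp
  show ?thesis
  proof (rule set_integrable_bound[OF _ m])
    show "set_integrable lborel {a..b} (\<lambda>x. B * f x)" using f by simp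
    show "AE x in lborel. x \<in> {a..b} \<longrightarrow> norm (c x * f x) \<le> norm (B * f x)"
    proof (intro AE_I2 impI)
      fix x assume x: "x \<in> {a..b}"
      have "\<bar>c x\<bar> * \<bar>f x\<bar> \<le> \<bar>B\<bar> * \<bar>f x\<bar>" using B[OF x] by (intro mult_right_mono) auto
      then show "norm (c x * f x) \<le> norm (B * f x)" by (simp add: abs_mult)
    qed
  qed
qed

lemma H1_repr:
  assumes "H1_dir \<delta> v g" "x \<in> {0..\<delta>}"
  shows "v x = v 0 + (LBINT t:{0..x}. g t)"
proof -
  have "v x = v 0 + (LBINT t=0..x. g t)" using assms unfolding H1_dir_def by blast
  moreover have "(LBINT t=0..x. g t) = (LBINT t:{0..x}. g t)"
    using interval_integral_Icc[of 0 x g] assms(2) by (simp add: zero_ereal_def)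
  ultimately show ?thesis by simp
qed

lemma H1_cont:
  assumes H: "H1_dir \<delta> v g"
  shows "continuous_on {0..\<delta>} v"
proof -
  have gi: "set_integrable lborel {0..\<delta>} g" using H by (simp add: H1_dir_def)
  have "g integrable_on {0..\<delta>}" using set_borel_integral_eq_integral(1)[OF gi] .
  then have c: "continuous_on {0..\<delta>} (\<lambda>x. v 0 + integral {0..x} g)"
    by (intro continuous_intros indefinite_integral_continuous_1)
  have "v x = v 0 + integral {0..x} g" if "x \<in> {0..\<delta>}" for x
  proof -
    have "set_integrable lborel {0..x} g"
      by (rule set_integrable_subset[OF gi]) (use that in auto)
    then show ?thesis using H1_repr[OF H that] set_borel_integral_eq_integral(2) by metis
  qed
  then show ?thesis using continuous_on_cong[of "{0..\<delta>}" "{0..\<delta>}" v "\<lambda>x. v 0 + integral {0..x} g"] c by blast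
qed

lemma pointwise_alg:
  fixes a g v G Gd V \<mu> :: real
  assumes a: "a > 0" and pw: "Gd - G\<^sup>2 / a + V * a \<ge> \<mu> * a"
  shows "(g\<^sup>2 + V * v\<^sup>2) * a \<ge> \<mu> * (v\<^sup>2 * a) - (Gd * v\<^sup>2 + G * (2 * v * g))"
proof -
  have e: "(g\<^sup>2 + V * v\<^sup>2) * a - (\<mu> * (v\<^sup>2 * a) - (Gd * v\<^sup>2 + G * (2 * v * g)))
     = (a * g + G * v)\<^sup>2 / a + (Gd - G\<^sup>2 / a + V * a - \<mu> * a) * v\<^sup>2"
    using a by (simp add: field_simps power2_eq_square)
  have "(a * g + G * v)\<^sup>2 / a \<ge> 0" using a by simp
  moreover have "(Gd - G\<^sup>2 / a + V * a - \<mu> * a) * v\<^sup>2 \<ge> 0" using pw by simp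
  ultimately show ?thesis using e by linarith
qed

lemma lower_form:
  fixes h b \<mu> \<delta> :: real and m :: int and G Gd v g :: "real \<Rightarrow> real"
  assumes H: "H1_dir \<delta> v g" and \<delta>: "0 \<le> \<delta>"
  and wpos: "\<And>\<tau>. \<tau> \<in> {0..\<delta>} \<Longrightarrow> 1 - sqrt h * \<tau> > 0"
  and Gder: "\<And>\<tau>. (G has_real_derivative Gd \<tau>) (at \<tau>)"
  and Gdc: "continuous_on {0..\<delta>} Gd"
  and G0: "G 0 = 1"
  and pw: "\<And>\<tau>. \<tau> \<in> {0..\<delta>} \<Longrightarrow> Gd \<tau> - (G \<tau>)\<^sup>2 / (1 - sqrt h * \<tau>)
        + h / (1 - sqrt h * \<tau>)\<^sup>2 * (real_of_int m - b / 2 * (1 - sqrt h * \<tau>)\<^sup>2)\<^sup>2 * (1 - sqrt h * \<tau>)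
        \<ge> \<mu> * (1 - sqrt h * \<tau>)"
  shows "qform h b m \<delta> v g \<ge> \<mu> * wnorm2 h \<delta> v"
proof -
  define w where "w \<tau> = 1 - sqrt h * \<tau>" for \<tau>
  define V where "V \<tau> = h / (w \<tau>)\<^sup>2 * (real_of_int m - b / 2 * (w \<tau>)\<^sup>2)\<^sup>2" for \<tau>
  define q where "q x = 2 * v x * g x" for x
  have gi: "set_integrable lborel {0..\<delta>} g" and g2i: "set_integrable lborel {0..\<delta>} (\<lambda>t. (g t)\<^sup>2)"
    and v\<delta>: "v \<delta> = 0" using H by (auto simp: H1_dir_def)
  have vc: "continuous_on {0..\<delta>} v" using H1_cont[OF H] .
  have vrepr: "\<And>x. x \<in> {0..\<delta>} \<Longrightarrow> v x = v 0 + (LBINT t:{0..x}. g t)" using H1_repr[OF H] by blast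
  have wc: "continuous_on {0..\<delta>} w" unfolding w_def by (intro continuous_intros)
  have Vc: "continuous_on {0..\<delta>} V" unfolding V_def
    by (intro continuous_intros wc) (use wpos in \<open>fastforce simp: w_def\<close>)
  have qi: "set_integrable lborel {0..\<delta>} q"
  proof -
    have "set_integrable lborel {0..\<delta>} (\<lambda>x. g x * v x + v x * g x)"
      by (rule ibp(1)[OF \<delta> gi gi vrepr vrepr])
    moreover have "(\<lambda>x. g x * v x + v x * g x) = q" by (auto simp: q_def)
    ultimately show ?thesis by metis
  qed
  have Wrepr: "(v x)\<^sup>2 = (v 0)\<^sup>2 + (LBINT t:{0..x}. q t)" if x: "x \<in> {0..\<delta>}" for x
  proof -
    have gix: "set_integrable lborel {0..x} g"
      by (rule set_integrable_subset[OF gi]) (use x in auto)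
    have vr: "\<And>y. y \<in> {0..x} \<Longrightarrow> v y = v 0 + (LBINT t:{0..y}. g t)"
      using x by (intro vrepr) auto
    have "(LBINT t:{0..x}. g t * v t + v t * g t) = v x * v x - v 0 * v 0"
      using ibp(2)[OF _ gix gix vr vr] x by (simp only: atLeastAtMost_iff)
    moreover have "(\<lambda>t. g t * v t + v t * g t) = q" by (auto simp: q_def)
    ultimately have "(LBINT t:{0..x}. q t) = v x * v x - v 0 * v 0" by metis
    then show ?thesis by (simp add: power2_eq_square)
  qed
  have Gdi: "set_integrable lborel {0..\<delta>} Gd" by (rule borel_integrable_atLeastAtMost'[OF Gdc])
  have Grepr: "G x = G 0 + (LBINT t:{0..x}. Gd t)" if x: "x \<in> {0..\<delta>}" for x
  proof -
    have "(LBINT t:{0..x}. Gd t) = G x - G 0"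
      unfolding set_lebesgue_integral_def
    proof (rule integral_FTC_atLeastAtMost)
      show "0 \<le> x" using x by auto
      show "continuous_on {0..x} Gd" by (rule continuous_on_subset[OF Gdc]) (use x in auto)
      show "\<And>y. 0 \<le> y \<Longrightarrow> y \<le> x \<Longrightarrow> (G has_vector_derivative Gd y) (at y within {0..x})"
        using Gder by (auto simp: has_real_derivative_iff_has_vector_derivative intro: has_vector_derivative_at_within)
    qed
    then show ?thesis by simp
  qed
  have I5: "set_integrable lborel {0..\<delta>} (\<lambda>x. Gd x * (v x)\<^sup>2 + G x * q x)"
    and E5: "(LBINT x:{0..\<delta>}. Gd x * (v x)\<^sup>2 + G x * q x) = G \<delta> * (v \<delta>)\<^sup>2 - G 0 * (v 0)\<^sup>2"
    using ibp[OF \<delta> Gdi qi, where U=G and W="\<lambda>x. (v x)\<^sup>2", OF Grepr Wrepr] by simp_all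
  have E5': "(LBINT x:{0..\<delta>}. Gd x * (v x)\<^sup>2 + G x * q x) = - (v 0)\<^sup>2"
    using E5 v\<delta> G0 by simp
  define Q where "Q \<tau> = ((g \<tau>)\<^sup>2 + V \<tau> * (v \<tau>)\<^sup>2) * w \<tau>" for \<tau>
  have Qi: "set_integrable lborel {0..\<delta>} Q"
  proof -
    have "set_integrable lborel {0..\<delta>} (\<lambda>x. w x * (g x)\<^sup>2)"
      by (rule set_integrable_cont_mult[OF g2i wc])
    moreover have "set_integrable lborel {0..\<delta>} (\<lambda>x. V x * (v x)\<^sup>2 * w x)"
      by (rule borel_integrable_atLeastAtMost') (intro continuous_intros Vc vc wc)
    ultimately have "set_integrable lborel {0..\<delta>} (\<lambda>x. w x * (g x)\<^sup>2 + V x * (v x)\<^sup>2 * w x)"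
      by (rule set_integral_add(1))
    moreover have "(\<lambda>x. w x * (g x)\<^sup>2 + V x * (v x)\<^sup>2 * w x) = Q"
      by (auto simp: Q_def algebra_simps)
    ultimately show ?thesis by metis
  qed
  have Ni: "set_integrable lborel {0..\<delta>} (\<lambda>x. (v x)\<^sup>2 * w x)"
    by (rule borel_integrable_atLeastAtMost') (intro continuous_intros vc wc)
  define R where "R x = \<mu> * ((v x)\<^sup>2 * w x) - (Gd x * (v x)\<^sup>2 + G x * q x)" for x
  have Ri: "set_integrable lborel {0..\<delta>} R"
    unfolding R_def using Ni I5 by (intro set_integral_diff(1) set_integrable_mult_right)
  have QR: "R x \<le> Q x" if x: "x \<in> {0..\<delta>}" for x
    unfolding R_def Q_def q_def
  proof (rule pointwise_alg)
    show "0 < w x" using wpos[OF x] by (simp add: w_def)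
    show "\<mu> * w x \<le> Gd x - (G x)\<^sup>2 / w x + V x * w x"
      using pw[OF x] by (simp add: w_def V_def)
  qed
  have f1: "(LBINT x:{0..\<delta>}. R x) \<le> (LBINT x:{0..\<delta>}. Q x)"
    by (rule set_integral_mono[OF Ri Qi QR])
  have f2: "(LBINT x:{0..\<delta>}. R x) = \<mu> * (LBINT x:{0..\<delta>}. (v x)\<^sup>2 * w x) + (v 0)\<^sup>2"
    unfolding R_def using Ni I5 E5' by (simp add: set_integral_diff(2))
  have qf: "qform h b m \<delta> v g = (LBINT x:{0..\<delta>}. Q x) - (v 0)\<^sup>2"
    unfolding qform_def Q_def V_def w_def
    using interval_integral_Icc[of 0 \<delta>] \<delta> by (simp add: zero_ereal_def)
  have wn: "wnorm2 h \<delta> v = (LBINT x:{0..\<delta>}. (v x)\<^sup>2 * w x)"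
    unfolding wnorm2_def w_def
    using interval_integral_Icc[of 0 \<delta>] \<delta> by (simp add: zero_ereal_def)
  show ?thesis unfolding qf wn using f1 f2 by linarith
qed

lemma ftc_Icc:
  fixes F f :: "real \<Rightarrow> real"
  assumes "a \<le> b" "\<And>x. (F has_real_derivative f x) (at x)" "continuous_on {a..b} f"
  shows "(LBINT x:{a..b}. f x) = F b - F a"
  unfolding set_lebesgue_integral_def
  using assms
  by (intro integral_FTC_atLeastAtMost)
     (auto simp: has_real_derivative_iff_has_vector_derivative intro: has_vector_derivative_at_within)

lemma exp_big:
  fixes \<delta> :: real assumes "200 \<le> \<delta>"
  shows "exp (-\<delta>) \<le> 1/20000" "exp (-\<delta>) * \<delta> \<le> 1/100" "exp (-\<delta>) > 0"
proof -
  have q: "1 + \<delta> + \<delta>\<^sup>2/2 \<le> exp \<delta>" using exp_lower_Taylor_quadratic[of \<delta>] assms by simp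
  have "\<delta>\<^sup>2/2 \<ge> 100 * \<delta>" using assms by (simp add: power2_eq_square)
  then have e1: "exp \<delta> \<ge> 100 * \<delta>" using q assms by linarith
  have e2: "exp \<delta> \<ge> 20000" using e1 assms by linarith
  have ei: "exp (-\<delta>) = 1 / exp \<delta>" by (simp add: exp_minus field_simps)
  show "exp (-\<delta>) \<le> 1/20000" unfolding ei using e2 by (simp add: field_simps)
  show "exp (-\<delta>) * \<delta> \<le> 1/100" unfolding ei using e1 assms by (simp add: field_simps)
  show "exp (-\<delta>) > 0" by simp
qed

lemma alg_up:
  fixes \<epsilon> c \<delta> :: real
  assumes e0: "0<\<epsilon>" and e1: "\<epsilon> \<le> 1/2" and c0: "0<c" and c1: "c \<le> 1/20000" and d0: "0 \<le> \<delta>" and cd: "c*\<delta> \<le> 1/100"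
  shows "(1/2 - \<epsilon>/4 - c\<^sup>2/2 + \<epsilon> * c\<^sup>2 * (2*\<delta>+1)/4) - (1-c)\<^sup>2 \<le>
     (-1 - \<epsilon> - \<epsilon>\<^sup>2/2 + 24*c + 16*c*\<delta>) * ((1/2 - \<epsilon>/4 - c\<^sup>2/2 + \<epsilon> * c\<^sup>2 * (2*\<delta>+1)/4) + c\<^sup>2 * \<delta>)"
proof -
  define r where "r = - c\<^sup>2/2 + \<epsilon> * c\<^sup>2 * (2*\<delta>+1)/4"
  define s where "s = 1 + \<epsilon> + \<epsilon>\<^sup>2/2"
  define P where "P = 24*c + 16*c*\<delta>"
  define Dup where "Dup = (1/2 - \<epsilon>/4 + r) + c\<^sup>2 * \<delta>"
  define N where "N = (1/2 - \<epsilon>/4 + r) - (1-c)\<^sup>2"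
  have cc: "c\<^sup>2 \<le> c/20000" using c0 c1 by (simp add: power2_eq_square mult_left_mono[of c "1/20000" c, simplified])
  have c2d: "c\<^sup>2 * \<delta> \<le> c/100" using c0 cd mult_left_mono[OF cd, of c] by (simp add: power2_eq_square mult.assoc)
  have c2d0: "0 \<le> c\<^sup>2 * \<delta>" using d0 by simp
  have "\<epsilon> * (c\<^sup>2 * (2*\<delta>+1)) \<le> (1/2) * (c\<^sup>2 * (2*\<delta>+1))"
    using e1 d0 by (intro mult_right_mono) auto
  moreover have "c\<^sup>2 * (2*\<delta>+1) = 2*(c\<^sup>2*\<delta>) + c\<^sup>2" by (simp add: algebra_simps)
  then have "c\<^sup>2 * (2*\<delta>+1) \<le> c/40" using cc c2d c0 by linarith
  ultimately have "\<epsilon> * (c\<^sup>2 * (2*\<delta>+1)) \<le> c/80" by linarith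
  moreover have "r = -c\<^sup>2/2 + (\<epsilon> * (c\<^sup>2 * (2*\<delta>+1)))/4" by (simp add: r_def mult.assoc)
  moreover have "c\<^sup>2 \<ge> 0" by simp
  ultimately have r_le: "r \<le> c/320" by linarith
  have r_ge: "r \<ge> - c\<^sup>2/2" unfolding r_def using e0 d0 by simp
  have s0: "0 \<le> s" and s2: "s \<le> 2" unfolding s_def using e0 e1 power_mono[OF e1, of 2] by (auto simp: power2_eq_square)
  have key: "N + s * Dup = - (\<epsilon> * \<epsilon> * \<epsilon>)/8 + r + 2*c - c\<^sup>2 + s * (r + c\<^sup>2 * \<delta>)"
    unfolding N_def Dup_def s_def by (simp add: algebra_simps power2_eq_square power3_eq_cube)
  have "s * (r + c\<^sup>2 * \<delta>) \<le> s * (c/50)" using r_le c2d s0 c0 by (intro mult_left_mono) auto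
  also have "\<dots> \<le> 2 * (c/50)" using s2 c0 by (intro mult_right_mono) auto
  finally have sb: "s * (r + c\<^sup>2 * \<delta>) \<le> c/25" by simp
  have "\<epsilon> * \<epsilon> * \<epsilon> \<ge> 0" using e0 by simp
  then have A: "N + s * Dup \<le> 3 * c" using key sb r_le c0 zero_le_power2[of c] by linarith
  have Dq: "Dup \<ge> 1/4" unfolding Dup_def using r_ge cc c1 e1 c2d0 by simp
  have "P * Dup \<ge> (24 * c) * (1/4)"
    using Dq c0 d0 unfolding P_def by (intro mult_mono) auto
  then have B: "P * Dup \<ge> 6 * c" by simp
  have "N - (- s + P) * Dup = (N + s * Dup) - P * Dup" by (simp add: algebra_simps)
  then have "N \<le> (- s + P) * Dup" using A B c0 by linarith
  then show ?thesis unfolding N_def Dup_def s_def P_def r_def by (simp add: algebra_simps)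
qed

lemma upper_test:
  fixes h b \<delta> K :: real and m :: int
  assumes h: "0 < h" "h \<le> 1/4" and \<delta>: "200 \<le> \<delta>" and wp: "sqrt h * \<delta> < 1"
  and VK: "\<And>\<tau>. \<tau> \<in> {0..\<delta>} \<Longrightarrow> h / (1 - sqrt h * \<tau>)\<^sup>2 * (real_of_int m - b / 2 * (1 - sqrt h * \<tau>)\<^sup>2)\<^sup>2 \<le> h * K"
  shows "\<exists>v g. H1_dir \<delta> v g \<and> wnorm2 h \<delta> v > 0 \<and>
     qform h b m \<delta> v g / wnorm2 h \<delta> v \<le> -1 - sqrt h - h/2 + h*K + 24 * exp (-\<delta>) + 16 * exp (-\<delta>) * \<delta>"
proof -
  define \<epsilon> where "\<epsilon> = sqrt h"
  define c where "c = exp (-\<delta>)"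
  define w where "w \<tau> = 1 - \<epsilon> * \<tau>" for \<tau>
  define V where "V \<tau> = h / (w \<tau>)\<^sup>2 * (real_of_int m - b / 2 * (w \<tau>)\<^sup>2)\<^sup>2" for \<tau>
  define v where "v \<tau> = exp (-\<tau>) - c" for \<tau>
  define g where "g \<tau> = - exp (-\<tau>)" for \<tau> :: real
  have \<epsilon>0: "0 < \<epsilon>" using h by (simp add: \<epsilon>_def)
  have \<epsilon>h: "\<epsilon>\<^sup>2 = h" using h by (simp add: \<epsilon>_def)
  have \<epsilon>1: "\<epsilon> \<le> 1/2" unfolding \<epsilon>_def using h real_sqrt_le_mono[of h "1/4"]
    by (simp add: real_sqrt_divide)
  have c0: "0 < c" and c1: "c \<le> 1/20000" and c\<delta>: "c * \<delta> \<le> 1/100"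
    using exp_big[OF \<delta>] by (auto simp: c_def)
  have \<delta>0: "0 \<le> \<delta>" using \<delta> by simp
  have wpos: "w \<tau> > 0" if "\<tau> \<in> {0..\<delta>}" for \<tau>
  proof -
    have "\<epsilon> * \<tau> \<le> \<epsilon> * \<delta>" using that \<epsilon>0 by (intro mult_left_mono) auto
    then show ?thesis using wp by (simp add: w_def \<epsilon>_def)
  qed
  have wle: "w \<tau> \<le> 1" if "\<tau> \<in> {0..\<delta>}" for \<tau> using that \<epsilon>0 by (simp add: w_def)
  have contw: "continuous_on {0..\<delta>} w" unfolding w_def by (intro continuous_intros)
  have contV: "continuous_on {0..\<delta>} V" unfolding V_def
    by (intro continuous_intros contw) (use wpos in fastforce)
  have contv: "continuous_on {0..\<delta>} v" unfolding v_def by (intro continuous_intros)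
  have H: "H1_dir \<delta> v g"
    unfolding H1_dir_def
  proof (intro conjI ballI)
    show "set_integrable lborel {0..\<delta>} g" unfolding g_def
      by (intro borel_integrable_atLeastAtMost' continuous_intros)
    show "set_integrable lborel {0..\<delta>} (\<lambda>t. (g t)\<^sup>2)" unfolding g_def
      by (intro borel_integrable_atLeastAtMost' continuous_intros)
    show "v \<delta> = 0" by (simp add: v_def c_def)
    fix x assume x: "x \<in> {0..\<delta>}"
    have "(LBINT t=0..x. g t) = (LBINT t:{0..x}. g t)"
      using interval_integral_Icc[of 0 x g] x by (simp add: zero_ereal_def)
    also have "\<dots> = exp (-x) - exp (-0)"
      by (rule ftc_Icc) (use x in \<open>auto simp: g_def intro!: derivative_eq_intros continuous_intros\<close>)
    finally show "v x = v 0 + (LBINT t=0..x. g t)" by (simp add: v_def)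
  qed
  define I where "I = 1/2 - \<epsilon>/4 - c\<^sup>2/2 + \<epsilon> * c\<^sup>2 * (2*\<delta>+1)/4"
  define F where "F \<tau> = - (exp (-\<tau>))\<^sup>2 / 2 + \<epsilon> * (exp (-\<tau>))\<^sup>2 * (2*\<tau>+1) / 4" for \<tau>
  have Fd: "(F has_real_derivative (exp (-\<tau>))\<^sup>2 * w \<tau>) (at \<tau>)" for \<tau>
    unfolding F_def w_def
    by (rule derivative_eq_intros refl | simp)+ (simp add: algebra_simps power2_eq_square)
  have Ieq: "(LBINT \<tau>:{0..\<delta>}. (exp (-\<tau>))\<^sup>2 * w \<tau>) = I"
  proof -
    have "(LBINT \<tau>:{0..\<delta>}. (exp (-\<tau>))\<^sup>2 * w \<tau>) = F \<delta> - F 0"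
      by (rule ftc_Icc[OF \<delta>0 Fd]) (intro continuous_intros contw)
    also have "\<dots> = I" by (simp add: F_def I_def c_def algebra_simps)
    finally show ?thesis .
  qed
  define D where "D = wnorm2 h \<delta> v"
  have Deq: "D = (LBINT \<tau>:{0..\<delta>}. (v \<tau>)\<^sup>2 * w \<tau>)"
    unfolding D_def wnorm2_def w_def \<epsilon>_def
    using interval_integral_Icc[of 0 \<delta>] \<delta>0 by (simp add: zero_ereal_def)
  have Di: "set_integrable lborel {0..\<delta>} (\<lambda>\<tau>. (v \<tau>)\<^sup>2 * w \<tau>)"
    by (intro borel_integrable_atLeastAtMost' continuous_intros contv contw)
  have Dup: "D \<le> I + c\<^sup>2 * \<delta>"
  proof -
    have "(LBINT \<tau>:{0..\<delta>}. (exp (-\<tau>))\<^sup>2 * w \<tau> + c\<^sup>2) = (F \<delta> + c\<^sup>2 * \<delta>) - (F 0 + c\<^sup>2 * 0)"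
      by (rule ftc_Icc[OF \<delta>0]) (auto intro!: derivative_eq_intros Fd continuous_intros contw)
    also have "\<dots> = I + c\<^sup>2 * \<delta>" using Ieq ftc_Icc[OF \<delta>0 Fd] by (simp add: F_def I_def c_def algebra_simps)
    finally have e: "(LBINT \<tau>:{0..\<delta>}. (exp (-\<tau>))\<^sup>2 * w \<tau> + c\<^sup>2) = I + c\<^sup>2 * \<delta>" .
    have "D \<le> (LBINT \<tau>:{0..\<delta>}. (exp (-\<tau>))\<^sup>2 * w \<tau> + c\<^sup>2)"
      unfolding Deq
    proof (rule set_integral_mono[OF Di])
      show "set_integrable lborel {0..\<delta>} (\<lambda>\<tau>. (exp (-\<tau>))\<^sup>2 * w \<tau> + c\<^sup>2)"
        by (intro borel_integrable_atLeastAtMost' continuous_intros contw)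
      fix \<tau> assume t: "\<tau> \<in> {0..\<delta>}"
      have "(v \<tau>)\<^sup>2 * w \<tau> = (exp (-\<tau>))\<^sup>2 * w \<tau> - 2 * c * exp (-\<tau>) * w \<tau> + c\<^sup>2 * w \<tau>"
        by (simp add: v_def power2_eq_square algebra_simps)
      moreover have "0 \<le> 2 * c * exp (-\<tau>) * w \<tau>" using c0 wpos[OF t] by simp
      moreover have "c\<^sup>2 * w \<tau> \<le> c\<^sup>2" using wle[OF t] by (simp add: mult_left_le)
      ultimately show "(v \<tau>)\<^sup>2 * w \<tau> \<le> (exp (-\<tau>))\<^sup>2 * w \<tau> + c\<^sup>2" by linarith
    qed
    then show ?thesis using e by simp
  qed
  have Dlow: "I - 2 * c * (1 - c) \<le> D"
  proof -
    have "(LBINT \<tau>:{0..\<delta>}. (exp (-\<tau>))\<^sup>2 * w \<tau> - 2 * c * exp (-\<tau>)) = (F \<delta> + 2 * c * exp (-\<delta>)) - (F 0 + 2 * c * exp (-0))"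
      by (rule ftc_Icc[OF \<delta>0]) (auto intro!: derivative_eq_intros Fd continuous_intros contw)
    also have "\<dots> = I - 2 * c * (1 - c)" using Ieq ftc_Icc[OF \<delta>0 Fd] by (simp add: F_def I_def c_def algebra_simps)
    finally have e: "(LBINT \<tau>:{0..\<delta>}. (exp (-\<tau>))\<^sup>2 * w \<tau> - 2 * c * exp (-\<tau>)) = I - 2 * c * (1 - c)" .
    have "(LBINT \<tau>:{0..\<delta>}. (exp (-\<tau>))\<^sup>2 * w \<tau> - 2 * c * exp (-\<tau>)) \<le> D"
      unfolding Deq
    proof (rule set_integral_mono[OF _ Di])
      show "set_integrable lborel {0..\<delta>} (\<lambda>\<tau>. (exp (-\<tau>))\<^sup>2 * w \<tau> - 2 * c * exp (-\<tau>))"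
        by (intro borel_integrable_atLeastAtMost' continuous_intros contw)
      fix \<tau> assume t: "\<tau> \<in> {0..\<delta>}"
      have "(v \<tau>)\<^sup>2 * w \<tau> = (exp (-\<tau>))\<^sup>2 * w \<tau> - 2 * c * exp (-\<tau>) * w \<tau> + c\<^sup>2 * w \<tau>"
        by (simp add: v_def power2_eq_square algebra_simps)
      moreover have "2 * c * exp (-\<tau>) * w \<tau> \<le> 2 * c * exp (-\<tau>)" using c0 wle[OF t] by (simp add: mult_left_le)
      moreover have "0 \<le> c\<^sup>2 * w \<tau>" using wpos[OF t] by simp
      ultimately show "(exp (-\<tau>))\<^sup>2 * w \<tau> - 2 * c * exp (-\<tau>) \<le> (v \<tau>)\<^sup>2 * w \<tau>" by linarith
    qed
    then show ?thesis using e by simp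
  qed
  have Ilow: "I \<ge> 1/4"
  proof -
    have "\<epsilon> * c\<^sup>2 * (2*\<delta>+1)/4 \<ge> 0" using \<epsilon>0 \<delta>0 by simp
    moreover have "c\<^sup>2 \<le> (1/2)\<^sup>2" using c0 c1 by (intro power_mono) auto
    then have "c\<^sup>2 \<le> 1/4" by (simp add: power2_eq_square)
    ultimately show ?thesis unfolding I_def using \<epsilon>1 by linarith
  qed
  have "2 * c * (1 - c) \<le> 2 * c" using c0 by (simp add: algebra_simps)
  then have Dpos: "D > 0" using Dlow Ilow c0 c1 by linarith
  have Q: "qform h b m \<delta> v g \<le> I + h * K * D - (1 - c)\<^sup>2"
  proof -
    have qf: "qform h b m \<delta> v g = (LBINT \<tau>:{0..\<delta>}. ((g \<tau>)\<^sup>2 + V \<tau> * (v \<tau>)\<^sup>2) * w \<tau>) - (v 0)\<^sup>2"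
      unfolding qform_def V_def w_def \<epsilon>_def
      using interval_integral_Icc[of 0 \<delta>] \<delta>0 by (simp add: zero_ereal_def)
    have "(LBINT \<tau>:{0..\<delta>}. ((g \<tau>)\<^sup>2 + V \<tau> * (v \<tau>)\<^sup>2) * w \<tau>)
        \<le> (LBINT \<tau>:{0..\<delta>}. (exp (-\<tau>))\<^sup>2 * w \<tau> + (h * K) * ((v \<tau>)\<^sup>2 * w \<tau>))"
    proof (rule set_integral_mono)
      show "set_integrable lborel {0..\<delta>} (\<lambda>\<tau>. ((g \<tau>)\<^sup>2 + V \<tau> * (v \<tau>)\<^sup>2) * w \<tau>)"
        unfolding g_def by (intro borel_integrable_atLeastAtMost' continuous_intros contw contV contv)
      show "set_integrable lborel {0..\<delta>} (\<lambda>\<tau>. (exp (-\<tau>))\<^sup>2 * w \<tau> + (h * K) * ((v \<tau>)\<^sup>2 * w \<tau>))"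
        by (intro borel_integrable_atLeastAtMost' continuous_intros contw contv)
      fix \<tau> assume t: "\<tau> \<in> {0..\<delta>}"
      have "V \<tau> * ((v \<tau>)\<^sup>2 * w \<tau>) \<le> (h * K) * ((v \<tau>)\<^sup>2 * w \<tau>)"
        using VK[OF t] wpos[OF t] by (intro mult_right_mono) (auto simp: V_def w_def \<epsilon>_def)
      then show "((g \<tau>)\<^sup>2 + V \<tau> * (v \<tau>)\<^sup>2) * w \<tau> \<le> (exp (-\<tau>))\<^sup>2 * w \<tau> + (h * K) * ((v \<tau>)\<^sup>2 * w \<tau>)"
        by (simp add: g_def algebra_simps)
    qed
    also have "\<dots> = I + h * K * D"
      using set_integral_add(2)[OF _ set_integrable_mult_right[OF Di]] Ieq Deq
        borel_integrable_atLeastAtMost'[of 0 \<delta> "\<lambda>\<tau>. (exp (-\<tau>))\<^sup>2 * w \<tau>"] contw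
      by (simp add: continuous_intros)
    finally show ?thesis unfolding qf by (simp add: v_def)
  qed
  define T where "T = -1 - \<epsilon> - \<epsilon>\<^sup>2/2 + 24*c + 16*c*\<delta>"
  have NT: "I - (1-c)\<^sup>2 \<le> T * (I + c\<^sup>2 * \<delta>)"
    using alg_up[OF \<epsilon>0 \<epsilon>1 c0 c1 \<delta>0 c\<delta>] unfolding T_def I_def .
  have Tneg: "T < 0" unfolding T_def using c1 c\<delta> \<epsilon>0 zero_le_power2[of \<epsilon>] by linarith
  have "T * (I + c\<^sup>2 * \<delta>) \<le> T * D" using Tneg Dup by (intro mult_left_mono_neg) auto
  then have "qform h b m \<delta> v g \<le> (T + h * K) * D" using Q NT by (simp add: algebra_simps)
  then have "qform h b m \<delta> v g / D \<le> T + h * K" using Dpos by (simp add: divide_le_eq)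
  moreover have "T + h * K = -1 - sqrt h - h/2 + h*K + 24 * exp (-\<delta>) + 16 * exp (-\<delta>) * \<delta>"
    unfolding T_def using \<epsilon>h by (simp add: \<epsilon>_def c_def)
  ultimately show ?thesis using H Dpos unfolding D_def by auto
qed

lemma exp_pow_lim:
  fixes q :: real
  shows "((\<lambda>x. exp (-x) * x powr q) \<longlongrightarrow> 0) at_top"
proof -
  obtain k :: nat where k: "q \<le> real k" using real_arch_simple by blast
  have "eventually (\<lambda>x. norm (exp (-x) * x powr q) \<le> x ^ k / exp x) at_top"
    using eventually_ge_at_top[of 1]
  proof eventually_elim
    case (elim x)
    have "x powr q \<le> x powr (real k)" using elim k by (intro powr_mono) auto
    also have "\<dots> = x ^ k" using elim by (simp add: powr_realpow)
    finally have "exp (-x) * x powr q \<le> exp (-x) * x ^ k" by (intro mult_left_mono) auto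
    then show ?case by (simp add: exp_minus field_simps)
  qed
  then show ?thesis by (rule Lim_null_comparison) (rule tendsto_power_div_exp_0)
qed

lemma V_bound:
  fixes m :: int and b s w :: real
  assumes w1: "1 - s \<le> w" and w2: "w \<le> 1" and s0: "0 \<le> s" and s1: "s \<le> 1/2"
  shows "\<bar>(real_of_int m / w - b * w / 2)\<^sup>2 - (real_of_int m - b/2)\<^sup>2\<bar>
     \<le> (\<bar>real_of_int m\<bar> * s / (1 - s) + \<bar>b\<bar> * s / 2) * (2 * \<bar>real_of_int m - b/2\<bar> + (\<bar>real_of_int m\<bar> * s / (1 - s) + \<bar>b\<bar> * s / 2))"
proof -
  define X where "X = real_of_int m / w - b * w / 2"
  define y where "y = real_of_int m - b/2"
  define \<eta> where "\<eta> = \<bar>real_of_int m\<bar> * s / (1 - s) + \<bar>b\<bar> * s / 2"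
  have wpos: "w > 0" using w1 s1 by linarith
  have a1: "\<bar>1/w - 1\<bar> \<le> s / (1 - s)"
  proof -
    have "\<bar>1/w - 1\<bar> = (1 - w) / w" using wpos w2 by (simp add: field_simps)
    also have "\<dots> \<le> s / (1 - s)" using w1 w2 wpos s1 by (intro frac_le) auto
    finally show ?thesis .
  qed
  have "X - y = real_of_int m * (1/w - 1) + b * (1 - w) / 2" unfolding X_def y_def using wpos by (simp add: field_simps)
  then have "\<bar>X - y\<bar> \<le> \<bar>real_of_int m\<bar> * \<bar>1/w - 1\<bar> + \<bar>b\<bar> * \<bar>1 - w\<bar> / 2"
    by (metis abs_triangle_ineq abs_mult abs_divide abs_numeral)
  also have "\<dots> \<le> \<bar>real_of_int m\<bar> * (s / (1 - s)) + \<bar>b\<bar> * s / 2"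
    using a1 w1 w2 by (intro add_mono mult_left_mono divide_right_mono) auto
  finally have Xy: "\<bar>X - y\<bar> \<le> \<eta>" unfolding \<eta>_def by simp
  have "\<bar>X\<^sup>2 - y\<^sup>2\<bar> = \<bar>X - y\<bar> * \<bar>X + y\<bar>" by (simp add: power2_eq_square abs_mult[symmetric] algebra_simps)
  also have "\<dots> \<le> \<eta> * (2 * \<bar>y\<bar> + \<eta>)"
  proof (rule mult_mono)
    show "\<bar>X + y\<bar> \<le> 2 * \<bar>y\<bar> + \<eta>" using Xy by linarith
  qed (use Xy in auto)
  finally show ?thesis unfolding X_def y_def \<eta>_def .
qed

lemma pw_alg:
  fixes \<epsilon> \<tau> \<delta> s V \<beta> \<kappa> :: real
  assumes e0: "0 < \<epsilon>" and t0: "0 \<le> \<tau>" and td: "\<tau> \<le> \<delta>" and ws: "\<epsilon> * \<tau> \<le> s" and s1: "s < 1"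
  and VB: "V \<ge> \<epsilon>\<^sup>2 * (\<beta> - \<kappa>)"
  shows "(- \<epsilon> * (1 - \<epsilon>\<^sup>2 * \<tau> / 2) - \<epsilon>\<^sup>2 / 2 * (1 - \<epsilon> * \<tau>))
      - ((1 - \<epsilon> * \<tau>) * (1 - \<epsilon>\<^sup>2 * \<tau> / 2))\<^sup>2 / (1 - \<epsilon> * \<tau>) + V * (1 - \<epsilon> * \<tau>)
     \<ge> (-1 - \<epsilon> - \<epsilon>\<^sup>2/2 + \<epsilon>\<^sup>2 * (\<beta> - \<kappa>) - (\<epsilon>^4 * \<delta>\<^sup>2 / 4 + \<epsilon>^3 * \<delta>\<^sup>2 / (1 - s))) * (1 - \<epsilon> * \<tau>)"
proof -
  define w where "w = 1 - \<epsilon> * \<tau>"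
  have w0: "w > 0" and w1: "1 - s \<le> w" using ws s1 by (auto simp: w_def)
  define B where "B = (\<epsilon>^3 * \<tau> / 2 - \<epsilon>^3 * \<tau>\<^sup>2) / w - \<epsilon>^4 * \<tau>\<^sup>2 / 4 + V - \<epsilon>\<^sup>2 * (\<beta> - \<kappa>) + (\<epsilon>^4 * \<delta>\<^sup>2 / 4 + \<epsilon>^3 * \<delta>\<^sup>2 / (1 - s))"
  have ident: "(- \<epsilon> * (1 - \<epsilon>\<^sup>2 * \<tau> / 2) - \<epsilon>\<^sup>2 / 2 * w) - (w * (1 - \<epsilon>\<^sup>2 * \<tau> / 2))\<^sup>2 / w + V * w
     - (-1 - \<epsilon> - \<epsilon>\<^sup>2/2 + \<epsilon>\<^sup>2 * (\<beta> - \<kappa>) - (\<epsilon>^4 * \<delta>\<^sup>2 / 4 + \<epsilon>^3 * \<delta>\<^sup>2 / (1 - s))) * w = w * B"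
    unfolding B_def w_def using w0 unfolding w_def
    by (simp add: field_simps power2_eq_square power3_eq_cube power4_eq_xxxx)
  have tt: "\<tau>\<^sup>2 \<le> \<delta>\<^sup>2" using t0 td by (intro power_mono) auto
  have b1: "\<epsilon>^3 * \<tau> / 2 / w \<ge> 0" using e0 t0 w0 by simp
  have b2: "\<epsilon>^3 * \<tau>\<^sup>2 / w \<le> \<epsilon>^3 * \<delta>\<^sup>2 / (1 - s)"
    using e0 tt w0 w1 s1 by (intro frac_le mult_left_mono) auto
  have b3: "\<epsilon>^4 * \<tau>\<^sup>2 / 4 \<le> \<epsilon>^4 * \<delta>\<^sup>2 / 4" using tt by (intro divide_right_mono mult_left_mono) auto
  have "(\<epsilon>^3 * \<tau> / 2 - \<epsilon>^3 * \<tau>\<^sup>2) / w = \<epsilon>^3 * \<tau> / 2 / w - \<epsilon>^3 * \<tau>\<^sup>2 / w" by (simp add: diff_divide_distrib)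
  then have "B \<ge> 0" unfolding B_def using b1 b2 b3 VB by linarith
  then have "w * B \<ge> 0" using w0 by simp
  then show ?thesis using ident unfolding w_def by linarith
qed

lemma bounds_h:
  fixes b \<rho> h :: real and m :: int
  assumes h0: "0 < h" and h1: "h \<le> 1/4" and \<delta>b: "200 \<le> h powr (\<rho> - 1/2)" and sb: "h powr \<rho> \<le> 1/2"
  defines "\<delta> \<equiv> h powr (\<rho> - 1/2)" and "s \<equiv> h powr \<rho>"
  defines "\<beta> \<equiv> (real_of_int m - b/2)\<^sup>2"
  defines "\<kappa> \<equiv> (\<bar>real_of_int m\<bar> * s / (1 - s) + \<bar>b\<bar> * s / 2) * (2 * \<bar>real_of_int m - b/2\<bar> + (\<bar>real_of_int m\<bar> * s / (1 - s) + \<bar>b\<bar> * s / 2))"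
  shows "lambda1 b \<rho> h m \<ge> -1 - sqrt h - (sqrt h)\<^sup>2/2 + (sqrt h)\<^sup>2 * (\<beta> - \<kappa>) - ((sqrt h)^4 * \<delta>\<^sup>2 / 4 + (sqrt h)^3 * \<delta>\<^sup>2 / (1 - s))"
    and "lambda1 b \<rho> h m \<le> -1 - sqrt h - h/2 + h*(\<beta> + \<kappa>) + 24 * exp (-\<delta>) + 16 * exp (-\<delta>) * \<delta>"
proof -
  define \<mu> where "\<mu> = -1 - sqrt h - (sqrt h)\<^sup>2/2 + (sqrt h)\<^sup>2 * (\<beta> - \<kappa>) - ((sqrt h)^4 * \<delta>\<^sup>2 / 4 + (sqrt h)^3 * \<delta>\<^sup>2 / (1 - s))"
  define S where "S = {qform h b m \<delta> v g / wnorm2 h \<delta> v | v g. H1_dir \<delta> v g \<and> wnorm2 h \<delta> v \<noteq> 0}"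
  have lam: "lambda1 b \<rho> h m = Inf S" unfolding lambda1_def S_def \<delta>_def Let_def by simp
  have e0: "0 < sqrt h" using h0 by simp
  have hs: "(sqrt h)\<^sup>2 = h" using h0 by simp
  have s0: "0 \<le> s" unfolding s_def by simp
  have s1: "s \<le> 1/2" using sb unfolding s_def .
  have \<delta>0: "0 \<le> \<delta>" unfolding \<delta>_def by simp
  have es: "sqrt h * \<delta> = s"
  proof -
    have "sqrt h = h powr (1/2)" using h0 by (simp add: powr_half_sqrt)
    then show ?thesis unfolding \<delta>_def s_def using h0 by (simp add: powr_add[symmetric])
  qed
  have wb: "1 - s \<le> 1 - sqrt h * \<tau> \<and> 1 - sqrt h * \<tau> \<le> 1" if t: "\<tau> \<in> {0..\<delta>}" for \<tau>
  proof -
    have "sqrt h * \<tau> \<le> sqrt h * \<delta>" using t e0 by (intro mult_left_mono) auto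
    then show ?thesis using es t e0 by auto
  qed
  have Vb: "\<bar>h / (1 - sqrt h * \<tau>)\<^sup>2 * (real_of_int m - b / 2 * (1 - sqrt h * \<tau>)\<^sup>2)\<^sup>2 - h * \<beta>\<bar> \<le> h * \<kappa>"
    if t: "\<tau> \<in> {0..\<delta>}" for \<tau>
  proof -
    define w where "w = 1 - sqrt h * \<tau>"
    have w1: "1 - s \<le> w" and w2: "w \<le> 1" using wb[OF t] by (auto simp: w_def)
    have wpos: "w > 0" using w1 s1 by linarith
    have "h / w\<^sup>2 * (real_of_int m - b / 2 * w\<^sup>2)\<^sup>2 = h * (real_of_int m / w - b * w / 2)\<^sup>2"
      using wpos by (simp add: field_simps power2_eq_square)
    moreover have "\<bar>(real_of_int m / w - b * w / 2)\<^sup>2 - \<beta>\<bar> \<le> \<kappa>"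
      unfolding \<beta>_def \<kappa>_def by (rule V_bound[OF w1 w2 s0 s1])
    ultimately have "\<bar>h / w\<^sup>2 * (real_of_int m - b / 2 * w\<^sup>2)\<^sup>2 - h * \<beta>\<bar> \<le> h * \<kappa>"
      using h0 by (simp add: right_diff_distrib[symmetric] abs_mult)
    then show ?thesis unfolding w_def .
  qed
  have low: "x \<ge> \<mu>" if x: "x \<in> S" for x
  proof -
    obtain v g where x: "x = qform h b m \<delta> v g / wnorm2 h \<delta> v" and H: "H1_dir \<delta> v g"
      and nz: "wnorm2 h \<delta> v \<noteq> 0" using x unfolding S_def by blast
    have wn0: "wnorm2 h \<delta> v \<ge> 0"
    proof -
      have "wnorm2 h \<delta> v = (LBINT \<tau>:{0..\<delta>}. (v \<tau>)\<^sup>2 * (1 - sqrt h * \<tau>))"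
        unfolding wnorm2_def using interval_integral_Icc[of 0 \<delta>] \<delta>0 by (simp add: zero_ereal_def)
      also have "\<dots> \<ge> 0"
        unfolding set_lebesgue_integral_def
      proof (intro Bochner_Integration.integral_nonneg)
        fix \<tau> :: real
        show "0 \<le> indicator {0..\<delta>} \<tau> *\<^sub>R ((v \<tau>)\<^sup>2 * (1 - sqrt h * \<tau>))"
        proof (cases "\<tau> \<in> {0..\<delta>}")
          case True
          then have "0 \<le> 1 - sqrt h * \<tau>" using wb[OF True] s1 by linarith
          then show ?thesis using True by simp
        qed simp
      qed
      finally show ?thesis .
    qed
    have wnp: "wnorm2 h \<delta> v > 0" using wn0 nz by simp
    have "qform h b m \<delta> v g \<ge> \<mu> * wnorm2 h \<delta> v"
    proof (rule lower_form[OF H \<delta>0, where G="\<lambda>\<tau>. (1 - sqrt h * \<tau>) * (1 - (sqrt h)\<^sup>2 * \<tau> / 2)"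
          and Gd="\<lambda>\<tau>. - sqrt h * (1 - (sqrt h)\<^sup>2 * \<tau> / 2) - (sqrt h)\<^sup>2 / 2 * (1 - sqrt h * \<tau>)"])
      show "\<And>\<tau>. \<tau> \<in> {0..\<delta>} \<Longrightarrow> 1 - sqrt h * \<tau> > 0" using wb s1 by fastforce
      show "\<And>\<tau>. ((\<lambda>\<tau>. (1 - sqrt h * \<tau>) * (1 - (sqrt h)\<^sup>2 * \<tau> / 2)) has_real_derivative
          - sqrt h * (1 - (sqrt h)\<^sup>2 * \<tau> / 2) - (sqrt h)\<^sup>2 / 2 * (1 - sqrt h * \<tau>)) (at \<tau>)"
        by (rule derivative_eq_intros refl | simp)+
      show "continuous_on {0..\<delta>} (\<lambda>\<tau>. - sqrt h * (1 - (sqrt h)\<^sup>2 * \<tau> / 2) - (sqrt h)\<^sup>2 / 2 * (1 - sqrt h * \<tau>))"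
        by (intro continuous_intros) auto
      show "(1 - sqrt h * 0) * (1 - (sqrt h)\<^sup>2 * 0 / 2) = 1" by simp
      fix \<tau> assume t: "\<tau> \<in> {0..\<delta>}"
      show "(- sqrt h * (1 - (sqrt h)\<^sup>2 * \<tau> / 2) - (sqrt h)\<^sup>2 / 2 * (1 - sqrt h * \<tau>))
          - ((1 - sqrt h * \<tau>) * (1 - (sqrt h)\<^sup>2 * \<tau> / 2))\<^sup>2 / (1 - sqrt h * \<tau>)
          + h / (1 - sqrt h * \<tau>)\<^sup>2 * (real_of_int m - b / 2 * (1 - sqrt h * \<tau>)\<^sup>2)\<^sup>2 * (1 - sqrt h * \<tau>)
          \<ge> \<mu> * (1 - sqrt h * \<tau>)"
        unfolding \<mu>_def
      proof (rule pw_alg[OF e0])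
        show "0 \<le> \<tau>" "\<tau> \<le> \<delta>" using t by auto
        show "sqrt h * \<tau> \<le> s" using wb[OF t] by linarith
        show "s < 1" using s1 by simp
        show "(sqrt h)\<^sup>2 * (\<beta> - \<kappa>) \<le> h / (1 - sqrt h * \<tau>)\<^sup>2 * (real_of_int m - b / 2 * (1 - sqrt h * \<tau>)\<^sup>2)\<^sup>2"
          using Vb[OF t] hs by (simp add: right_diff_distrib abs_le_iff)
      qed
    qed
    then show ?thesis unfolding x using wnp by (simp add: le_divide_eq)
  qed
  have VK: "\<And>\<tau>. \<tau> \<in> {0..\<delta>} \<Longrightarrow> h / (1 - sqrt h * \<tau>)\<^sup>2 * (real_of_int m - b / 2 * (1 - sqrt h * \<tau>)\<^sup>2)\<^sup>2 \<le> h * (\<beta> + \<kappa>)"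
  proof -
    fix \<tau> assume t: "\<tau> \<in> {0..\<delta>}"
    show "h / (1 - sqrt h * \<tau>)\<^sup>2 * (real_of_int m - b / 2 * (1 - sqrt h * \<tau>)\<^sup>2)\<^sup>2 \<le> h * (\<beta> + \<kappa>)"
      using Vb[OF t] unfolding abs_le_iff distrib_left by linarith
  qed
  have wp: "sqrt h * \<delta> < 1" using es s1 by simp
  obtain v g where H: "H1_dir \<delta> v g" and pos: "wnorm2 h \<delta> v > 0"
    and up: "qform h b m \<delta> v g / wnorm2 h \<delta> v \<le> -1 - sqrt h - h/2 + h*(\<beta> + \<kappa>) + 24 * exp (-\<delta>) + 16 * exp (-\<delta>) * \<delta>"
    using upper_test[OF h0 h1 \<delta>b[folded \<delta>_def] wp VK] by blast
  have inS: "qform h b m \<delta> v g / wnorm2 h \<delta> v \<in> S" unfolding S_def using H pos by force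
  have bdd: "bdd_below S" using low by (intro bdd_belowI) 
  show "lambda1 b \<rho> h m \<ge> \<mu>" unfolding lam using low inS by (intro cInf_greatest) auto
  show "lambda1 b \<rho> h m \<le> -1 - sqrt h - h/2 + h*(\<beta> + \<kappa>) + 24 * exp (-\<delta>) + 16 * exp (-\<delta>) * \<delta>"
    unfolding lam using cInf_lower[OF inS bdd] up by linarith
qed

lemma powr_to_0:
  fixes a :: real assumes "0 < a"
  shows "((\<lambda>h. h powr a) \<longlongrightarrow> 0) (at_right 0)"
  by (rule tendsto_zero_powrI[OF tendsto_ident_at tendsto_const _ assms])
     (auto simp: eventually_at_right_less intro: eventually_mono[OF eventually_at_right_less[of 0]])

lemma delta_at_top:
  fixes \<rho> :: real assumes "\<rho> < 1/2"
  shows "filterlim (\<lambda>h. h powr (\<rho> - 1/2)) at_top (at_right 0)"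
proof -
  have "filterlim (\<lambda>h. inverse (h powr (1/2 - \<rho>))) at_top (at_right 0)"
    by (rule filterlim_inverse_at_top[OF powr_to_0])
       (use assms in \<open>auto intro: eventually_mono[OF eventually_at_right_less[of 0]]\<close>)
  moreover have "eventually (\<lambda>h. inverse (h powr (1/2 - \<rho>)) = h powr (\<rho> - 1/2)) (at_right 0)"
    by (intro eventually_mono[OF eventually_at_right_less[of 0]]) (simp add: powr_minus[symmetric])
  ultimately show ?thesis using filterlim_cong by (smt (verit, del_insts) eventually_mono)
qed

lemma per_m:
  fixes b \<rho> :: real and m :: int
  assumes \<rho>1: "1/4 < \<rho>" and \<rho>2: "\<rho> < 1/2"
  shows "((\<lambda>h. (lambda1 b \<rho> h m - (-1 - sqrt h + ((real_of_int m - b/2)\<^sup>2 - 1/2) * h)) / h) \<longlongrightarrow> 0) (at_right 0)"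
proof -
  define \<delta> where "\<delta> h = h powr (\<rho> - 1/2)" for h :: real
  define s where "s h = h powr \<rho>" for h :: real
  define \<eta> where "\<eta> h = \<bar>real_of_int m\<bar> * s h / (1 - s h) + \<bar>b\<bar> * s h / 2" for h
  define \<kappa> where "\<kappa> h = \<eta> h * (2 * \<bar>real_of_int m - b/2\<bar> + \<eta> h)" for h
  define q where "q = 1 / (1/2 - \<rho>)"
  define err where "err h = \<kappa> h + h powr (2*\<rho>) / 4 + h powr (2*\<rho> - 1/2) / (1 - s h)
      + 24 * (exp (- \<delta> h) * \<delta> h powr q) + 16 * (exp (- \<delta> h) * \<delta> h powr (q + 1))" for h
  have s0: "(s \<longlongrightarrow> 0) (at_right 0)" unfolding s_def using \<rho>1 by (intro powr_to_0) simp
  have "(\<eta> \<longlongrightarrow> \<bar>real_of_int m\<bar> * 0 / (1 - 0) + \<bar>b\<bar> * 0 / 2) (at_right 0)"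
    unfolding \<eta>_def by (intro tendsto_intros s0) auto
  then have \<eta>0: "(\<eta> \<longlongrightarrow> 0) (at_right 0)" by simp
  have "(\<kappa> \<longlongrightarrow> 0 * (2 * \<bar>real_of_int m - b/2\<bar> + 0)) (at_right 0)"
    unfolding \<kappa>_def by (intro tendsto_intros \<eta>0)
  then have \<kappa>0: "(\<kappa> \<longlongrightarrow> 0) (at_right 0)" by simp
  have e1: "((\<lambda>h. h powr (2*\<rho>) / 4) \<longlongrightarrow> 0 / 4) (at_right 0)"
    using \<rho>1 by (intro tendsto_intros powr_to_0) auto
  have e2: "((\<lambda>h. h powr (2*\<rho> - 1/2) / (1 - s h)) \<longlongrightarrow> 0 / (1 - 0)) (at_right 0)"
    using \<rho>1 by (intro tendsto_intros powr_to_0 s0) auto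
  have dlim: "filterlim \<delta> at_top (at_right 0)" unfolding \<delta>_def by (rule delta_at_top[OF \<rho>2])
  have e3: "((\<lambda>h. exp (- \<delta> h) * \<delta> h powr q) \<longlongrightarrow> 0) (at_right 0)"
    using filterlim_compose[OF exp_pow_lim[of q] dlim] .
  have e4: "((\<lambda>h. exp (- \<delta> h) * \<delta> h powr (q+1)) \<longlongrightarrow> 0) (at_right 0)"
    using filterlim_compose[OF exp_pow_lim[of "q+1"] dlim] .
  have errlim: "(err \<longlongrightarrow> 0) (at_right 0)"
  proof -
    have "(err \<longlongrightarrow> 0 + 0/4 + 0/(1-0) + 24 * 0 + 16 * 0) (at_right 0)"
      unfolding err_def by (intro tendsto_intros \<kappa>0 e1 e2 e3 e4)
    then show ?thesis by simp
  qed
  have ev1: "eventually (\<lambda>h::real. 0 < h \<and> h \<le> 1/4) (at_right 0)"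
    unfolding eventually_at_right_field by (intro exI[of _ "1/4"]) auto
  have ev2: "eventually (\<lambda>h. 200 \<le> \<delta> h) (at_right 0)"
    using dlim by (simp add: filterlim_at_top)
  have ev3: "eventually (\<lambda>h. s h \<le> 1/2) (at_right 0)"
    using order_tendstoD(2)[OF s0, of "1/2"] by (auto elim: eventually_mono)
  have "eventually (\<lambda>h. norm ((lambda1 b \<rho> h m - (-1 - sqrt h + ((real_of_int m - b/2)\<^sup>2 - 1/2) * h)) / h) \<le> err h) (at_right 0)"
    using ev1 ev2 ev3
  proof eventually_elim
    case (elim h)
    then have h0: "0 < h" and h1: "h \<le> 1/4" and db: "200 \<le> h powr (\<rho> - 1/2)" and sb: "h powr \<rho> \<le> 1/2"
      by (auto simp: \<delta>_def s_def)
    note B = bounds_h[OF h0 h1 db sb, where b=b and m=m]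
    define \<beta> where "\<beta> = (real_of_int m - b/2)\<^sup>2"
    define E where "E = (sqrt h)^4 * (\<delta> h)\<^sup>2 / 4 + (sqrt h)^3 * (\<delta> h)\<^sup>2 / (1 - s h)"
    define U where "U = 24 * exp (- \<delta> h) + 16 * exp (- \<delta> h) * \<delta> h"
    have hs: "(sqrt h)\<^sup>2 = h" using h0 by simp
    have L: "lambda1 b \<rho> h m \<ge> -1 - sqrt h - h/2 + h * (\<beta> - \<kappa> h) - E"
      using B(1) hs unfolding E_def \<beta>_def \<kappa>_def \<eta>_def \<delta>_def s_def by simp
    have R: "lambda1 b \<rho> h m \<le> -1 - sqrt h - h/2 + h * (\<beta> + \<kappa> h) + U"
      using B(2) unfolding U_def \<beta>_def \<kappa>_def \<eta>_def \<delta>_def s_def by simp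
    have sl: "s h \<le> 1/2" using sb by (simp add: s_def)
    have E0: "E \<ge> 0" unfolding E_def using sl h0 by (intro add_nonneg_nonneg divide_nonneg_pos) auto
    have U0: "U \<ge> 0" unfolding U_def using db by (simp add: \<delta>_def)
    have k0: "\<kappa> h \<ge> 0" unfolding \<kappa>_def \<eta>_def s_def using sb by (intro mult_nonneg_nonneg add_nonneg_nonneg) auto
    have "\<bar>lambda1 b \<rho> h m - (-1 - sqrt h + (\<beta> - 1/2) * h)\<bar> \<le> h * \<kappa> h + E + U"
      using L R E0 U0 k0 h0 by (simp add: abs_le_iff algebra_simps)
    then have A: "\<bar>(lambda1 b \<rho> h m - (-1 - sqrt h + (\<beta> - 1/2) * h)) / h\<bar> \<le> \<kappa> h + E / h + U / h"
      using h0 by (simp add: abs_divide divide_le_eq algebra_simps)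
    have sq: "sqrt h = h powr (1/2)" using h0 by (simp add: powr_half_sqrt)
    have d2: "(\<delta> h)\<^sup>2 = h powr (2*\<rho> - 1)"
      unfolding \<delta>_def power2_eq_square using h0 by (simp add: powr_add[symmetric])
    have s4: "(sqrt h)^4 = h * h" using hs by (metis power2_eq_square power_mult numeral_times_numeral semiring_norm(12) mult_2 numeral_Bit0)
    have s3: "(sqrt h)^3 = h * h powr (1/2)" using hs sq by (simp add: power3_eq_cube power2_eq_square)
    have Eh: "E / h = h powr (2*\<rho>) / 4 + h powr (2*\<rho> - 1/2) / (1 - s h)"
    proof -
      have a: "(sqrt h)^4 * (\<delta> h)\<^sup>2 / 4 / h = h powr (2*\<rho>) / 4"
        unfolding s4 d2 using h0 by (simp add: powr_add[symmetric] field_simps powr_mult_base)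
      have b: "(sqrt h)^3 * (\<delta> h)\<^sup>2 / (1 - s h) / h = h powr (2*\<rho> - 1/2) / (1 - s h)"
        unfolding s3 d2 using h0 sl by (simp add: powr_add[symmetric] field_simps)
      show ?thesis unfolding E_def using a b by (simp add: add_divide_distrib)
    qed
    have dq: "\<delta> h powr q = 1 / h"
    proof -
      have "\<delta> h powr q = h powr ((\<rho> - 1/2) * q)" unfolding \<delta>_def by (simp add: powr_powr)
      also have "(\<rho> - 1/2) * q = -1" unfolding q_def using \<rho>2 by (simp add: field_simps)
      finally show ?thesis using h0 by (simp add: powr_minus divide_inverse)
    qed
    have dpos: "\<delta> h > 0" unfolding \<delta>_def using h0 by simp
    have dq1: "\<delta> h powr (q + 1) = \<delta> h / h" using dq dpos by (simp add: powr_add)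
    have Uh: "U / h = 24 * (exp (- \<delta> h) * \<delta> h powr q) + 16 * (exp (- \<delta> h) * \<delta> h powr (q + 1))"
      unfolding U_def dq dq1 by (simp add: add_divide_distrib)
    show ?case using A unfolding Eh Uh err_def \<beta>_def by (simp add: algebra_simps)
  qed
  then show ?thesis by (rule Lim_null_comparison) (rule errlim)
qed

lemma min_diff:
  fixes f g :: "int \<Rightarrow> real" and M :: "int set"
  assumes fin: "finite M" and ne: "M \<noteq> {}"
  shows "\<bar>Min (f ` M) - Min (g ` M)\<bar> \<le> (\<Sum>m\<in>M. \<bar>f m - g m\<bar>)"
proof -
  have "Min (f ` M) \<in> f ` M" using fin ne by (intro Min_in) auto
  then obtain m1 where m1: "m1 \<in> M" "f m1 = Min (f ` M)" by (metis imageE)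
  have "Min (g ` M) \<in> g ` M" using fin ne by (intro Min_in) auto
  then obtain m2 where m2: "m2 \<in> M" "g m2 = Min (g ` M)" by (metis imageE)
  have s1: "\<bar>f m1 - g m1\<bar> \<le> (\<Sum>m\<in>M. \<bar>f m - g m\<bar>)" by (rule member_le_sum[OF m1(1)]) (use fin in auto)
  have s2: "\<bar>f m2 - g m2\<bar> \<le> (\<Sum>m\<in>M. \<bar>f m - g m\<bar>)" by (rule member_le_sum[OF m2(1)]) (use fin in auto)
  have "Min (g ` M) \<le> g m1" using fin m1 by (intro Min_le) auto
  moreover have "Min (f ` M) \<le> f m2" using fin m2 by (intro Min_le) auto
  ultimately show ?thesis using m1 m2 s1 s2 by (simp add: abs_le_iff)
qed

theorem proposition2p7:
  fixes A b \<rho> :: real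
  assumes "A > 0" and "b > 0" and "1/4 < \<rho>" and "\<rho> < 1/2"
  shows "(\<lambda>h. Inf ((\<lambda>m. lambda1 b \<rho> h m) ` {m::int. \<bar>real_of_int m\<bar> \<le> A})
              - (-1 - sqrt h + (beta_hat b A - 1/2) * h))
         \<in> o[at_right 0](\<lambda>h. h)"
proof -
  define M where "M = {m::int. \<bar>real_of_int m\<bar> \<le> A}"
  define \<beta> where "\<beta> m = (real_of_int m - b/2)\<^sup>2" for m :: int
  define T where "T h m = -1 - sqrt h + (\<beta> m - 1/2) * h" for h :: real and m
  have fin: "finite M"
  proof (rule finite_subset[OF _ finite_atLeastAtMost_int[of "- ceiling A" "ceiling A"]])
    show "M \<subseteq> {- ceiling A..ceiling A}"
    proof
      fix m assume "m \<in> M"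
      then have a: "real_of_int m \<le> A" "- A \<le> real_of_int m" by (auto simp: M_def abs_le_iff)
      have "m \<le> ceiling A" using ceiling_mono[OF a(1)] by simp
      moreover have "- ceiling A \<le> m" using ceiling_mono[OF a(2)] ceiling_minus[of A] floor_le_ceiling[of A] by linarith
      ultimately show "m \<in> {- ceiling A..ceiling A}" by simp
    qed
  qed
  have ne: "M \<noteq> {}" using assms(1) unfolding M_def by (metis (mono_tags, lifting) abs_zero empty_iff less_le mem_Collect_eq of_int_0)
  have bh: "beta_hat b A = Min (\<beta> ` M)"
    unfolding beta_hat_def M_def[symmetric] \<beta>_def[symmetric] using fin ne by (intro cInf_eq_Min) auto
  have Tmin: "-1 - sqrt h + (beta_hat b A - 1/2) * h = Min ((\<lambda>m. T h m) ` M)" if h: "h > 0" for h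
  proof -
    have mono: "mono (\<lambda>x. -1 - sqrt h + (x - 1/2) * h)" using h by (intro monoI) (simp add: mult_right_mono)
    have "-1 - sqrt h + (beta_hat b A - 1/2) * h = Min ((\<lambda>x. -1 - sqrt h + (x - 1/2) * h) ` (\<beta> ` M))"
      unfolding bh using mono_Min_commute[OF mono, of "\<beta> ` M"] fin ne by simp
    also have "\<dots> = Min ((\<lambda>m. T h m) ` M)" by (simp add: image_image T_def)
    finally show ?thesis .
  qed
  have lim: "((\<lambda>h. (Inf ((\<lambda>m. lambda1 b \<rho> h m) ` M) - (-1 - sqrt h + (beta_hat b A - 1/2) * h)) / h) \<longlongrightarrow> 0) (at_right 0)"
  proof (rule Lim_null_comparison)
    show "((\<lambda>h. \<Sum>m\<in>M. \<bar>(lambda1 b \<rho> h m - T h m) / h\<bar>) \<longlongrightarrow> 0) (at_right 0)"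
      by (intro tendsto_null_sum tendsto_rabs_zero)
         (unfold T_def \<beta>_def, rule per_m[OF assms(3,4)])
    show "eventually (\<lambda>h. norm ((Inf ((\<lambda>m. lambda1 b \<rho> h m) ` M) - (-1 - sqrt h + (beta_hat b A - 1/2) * h)) / h)
        \<le> (\<Sum>m\<in>M. \<bar>(lambda1 b \<rho> h m - T h m) / h\<bar>)) (at_right 0)"
      using eventually_at_right_less[of 0]
    proof eventually_elim
      case (elim h)
      have "Inf ((\<lambda>m. lambda1 b \<rho> h m) ` M) = Min ((\<lambda>m. lambda1 b \<rho> h m) ` M)"
        using fin ne by (intro cInf_eq_Min) auto
      then have "\<bar>Inf ((\<lambda>m. lambda1 b \<rho> h m) ` M) - (-1 - sqrt h + (beta_hat b A - 1/2) * h)\<bar>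
          \<le> (\<Sum>m\<in>M. \<bar>lambda1 b \<rho> h m - T h m\<bar>)"
        using Tmin[OF elim] min_diff[OF fin ne, of "\<lambda>m. lambda1 b \<rho> h m" "T h"] by simp
      then have "\<bar>Inf ((\<lambda>m. lambda1 b \<rho> h m) ` M) - (-1 - sqrt h + (beta_hat b A - 1/2) * h)\<bar> / h
          \<le> (\<Sum>m\<in>M. \<bar>lambda1 b \<rho> h m - T h m\<bar>) / h"
        using elim by (intro divide_right_mono) auto
      also have "\<dots> = (\<Sum>m\<in>M. \<bar>(lambda1 b \<rho> h m - T h m) / h\<bar>)"
        using elim by (simp add: sum_divide_distrib abs_divide)
      finally show ?case using elim by (simp add: abs_divide)
    qed
  qed
  have "(\<lambda>h. Inf ((\<lambda>m. lambda1 b \<rho> h m) ` M) - (-1 - sqrt h + (beta_hat b A - 1/2) * h)) \<in> o[at_right 0](\<lambda>h. h)"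
    by (rule smalloI_tendsto[OF lim]) (auto intro: eventually_mono[OF eventually_at_right_less[of 0]])
  then show ?thesis unfolding M_def .
qed

end
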